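(* For $u\in H^2(I)^d$ define $\mathcal J_{h,2}u(x):=u(a)+\int_a^x\mathcal I_{h,1}u'\,d\sigma$. Then $\mathcal J_{h,2}u\in\mathcal S^{2,0}(\mathcal T_h)^d$ and $$\int_I|(\mathcal J_{h,2}u)''|^2\,dx=\int_I|(\mathcal I_{h,1}u')'|^2\,dx\le\int_I|u''|^2\,dx.$$ Consequently, given $u_D\in H^2(I)^d$, every minimizer $u\in H^2(I)^d$ of the bending energy $E(u)=\frac12\int_I|u''|^2\,dx$ subject to the boundary conditions $u(a)=u_D(a)$, $u'(a)=u_D'(a)$, $u'(b)=u_D'(b)$ and the discrete inextensibility constraint $\mathcal I_{h,1}(|u'|^2-1)=0$ (i.e. $|u'(z)|=1$ for all $z\in\mathcal N_1(\mathcal T_h)$) belongs to $\mathcal S^{2,0}(\mathcal T_h)^d$.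
   Context: Mesh notation: $I=(a,b)\subset\mathbb R$, $a=x_0<x_1<\dots<x_M=b$, $I_i=[x_{i-1},x_i]$, $h_i=x_i-x_{i-1}$, $h=\max_i h_i$, $\mathcal T_h=\{I_1,\dots,I_M\}$. The meshes are quasi-uniform: there is $c>0$ independent of $h$ with $h\le c\,h_i$ for all $i$. Let $m_i=(x_{i-1}+x_i)/2$, $\mathcal N_1(\mathcal T_h)=\{x_0,\dots,x_M\}$, $\mathcal N_2(\mathcal T_h)=\mathcal N_1(\mathcal T_h)\cup\{m_1,\dots,m_M\}$. For $k\ge1$, $l\in\{0,1\}$, $\mathcal S^{k,l}(\mathcal T_h)=\{v\in C^l(\bar I): v|_{I_i}\in\mathcal P_k\ \forall i\}$. For $k\in\{1,2\}$, $\mathcal I_{h,k}:C^0(\bar I)^d\to\mathcal S^{k,0}(\mathcal T_h)^d$ is the nodal interpolant defined by $\mathcal I_{h,k}v(z)=v(z)$ for all $z\in\mathcal N_k(\mathcal T_h)$ (applied componentwise). *)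

theory Defs
  imports "HOL-Analysis.Analysis"
begin

definition is_mesh :: "real \<Rightarrow> real \<Rightarrow> (nat \<Rightarrow> real) \<Rightarrow> nat \<Rightarrow> bool" where
  "is_mesh a b xs M \<longleftrightarrow> 1 \<le> M \<and> xs 0 = a \<and> xs M = b \<and> (\<forall>i<M. xs i < xs (Suc i))"

definition S_k0 :: "nat \<Rightarrow> (nat \<Rightarrow> real) \<Rightarrow> nat \<Rightarrow> (real \<Rightarrow> 'a::euclidean_space) \<Rightarrow> bool" where
  "S_k0 k xs M v \<longleftrightarrow> continuous_on {xs 0..xs M} v \<and>
     (\<forall>i\<in>{1..M}. \<exists>c::nat \<Rightarrow> 'a. \<forall>t\<in>{xs (i - 1)..xs i}. v t = (\<Sum>j\<le>k. t ^ j *\<^sub>R c j))"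

text \<open>Nodal P1 interpolant I_{h,1}: on the element [xs j, xs (Suc j)] containing t,
  linear interpolation of the nodal values.\<close>
definition interp1 :: "(nat \<Rightarrow> real) \<Rightarrow> (real \<Rightarrow> 'a::euclidean_space) \<Rightarrow> real \<Rightarrow> 'a" where
  "interp1 xs v t = (let j = (LEAST j. t \<le> xs (Suc j)) in
      v (xs j) + ((t - xs j) / (xs (Suc j) - xs j)) *\<^sub>R (v (xs (Suc j)) - v (xs j)))"

text \<open>g is a weak (a.e.) derivative of f on [a,b]: g is Lebesgue integrable and f is its
  indefinite integral (so f is absolutely continuous with f' = g a.e.).\<close>
definition wderiv :: "real \<Rightarrow> real \<Rightarrow> (real \<Rightarrow> 'a::euclidean_space) \<Rightarrow> (real \<Rightarrow> 'a) \<Rightarrow> bool" where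
  "wderiv a b f g \<longleftrightarrow> g absolutely_integrable_on {a..b} \<and>
     (\<forall>t\<in>{a..b}. f t = f a + integral {a..t} g)"

definition sq_int :: "real \<Rightarrow> real \<Rightarrow> (real \<Rightarrow> 'a::euclidean_space) \<Rightarrow> bool" where
  "sq_int a b g \<longleftrightarrow> (\<lambda>t. (norm (g t))\<^sup>2) integrable_on {a..b}"

text \<open>u \<in> H^2(a,b)^d with (continuous) first derivative u1 and weak second derivative u2 \<in> L^2.\<close>
definition H2_rep :: "real \<Rightarrow> real \<Rightarrow> (real \<Rightarrow> 'a::euclidean_space) \<Rightarrow> (real \<Rightarrow> 'a) \<Rightarrow> (real \<Rightarrow> 'a) \<Rightarrow> bool" where
  "H2_rep a b u u1 u2 \<longleftrightarrow>
     (\<forall>t\<in>{a..b}. (u has_vector_derivative u1 t) (at t within {a..b})) \<and>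
     wderiv a b u1 u2 \<and> sq_int a b u2"

definition H2 :: "real \<Rightarrow> real \<Rightarrow> (real \<Rightarrow> 'a::euclidean_space) \<Rightarrow> bool" where
  "H2 a b u \<longleftrightarrow> (\<exists>u1 u2. H2_rep a b u u1 u2)"

definition L2sq :: "real \<Rightarrow> real \<Rightarrow> (real \<Rightarrow> 'a::euclidean_space) \<Rightarrow> real" where
  "L2sq a b g = integral {a..b} (\<lambda>t. (norm (g t))\<^sup>2)"

definition J2 :: "(nat \<Rightarrow> real) \<Rightarrow> (real \<Rightarrow> 'a::euclidean_space) \<Rightarrow> (real \<Rightarrow> 'a) \<Rightarrow> real \<Rightarrow> 'a" where
  "J2 xs u u1 x = u (xs 0) + integral {xs 0..x} (interp1 xs u1)"

definition admissible :: "(nat \<Rightarrow> real) \<Rightarrow> nat \<Rightarrow> (real \<Rightarrow> 'a::euclidean_space) \<Rightarrow> (real \<Rightarrow> 'a)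
     \<Rightarrow> (real \<Rightarrow> 'a) \<Rightarrow> (real \<Rightarrow> 'a) \<Rightarrow> (real \<Rightarrow> 'a) \<Rightarrow> bool" where
  "admissible xs M uD uD1 u u1 u2 \<longleftrightarrow> H2_rep (xs 0) (xs M) u u1 u2 \<and>
     u (xs 0) = uD (xs 0) \<and> u1 (xs 0) = uD1 (xs 0) \<and> u1 (xs M) = uD1 (xs M) \<and>
     (\<forall>i\<le>M. norm (u1 (xs i)) = 1)"

definition bending :: "real \<Rightarrow> real \<Rightarrow> (real \<Rightarrow> 'a::euclidean_space) \<Rightarrow> real" where
  "bending a b u2 = L2sq a b u2 / 2"

end

theory Submission
  imports Defs
begin


lemma borel_sigma_ivl: "sets (borel::real measure) = sigma_sets UNIV (range (\<lambda>(a,b). {a..b::real}))"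
  by (subst borel_eq_atLeastAtMost) (simp add: sets_measure_of)

lemma borel_lebesgue: "A \<in> sets (borel::real measure) \<Longrightarrow> A \<in> sets lebesgue"
  by (rule sets_completionI_sets) simp

lemma sigma_finite_lebesgue_real: "sigma_finite_measure (lebesgue :: real measure)"
  unfolding sigma_finite_measure_def
proof (intro exI[of _ "range (\<lambda>n::nat. cbox (-real n) (real n))"] conjI)
  show "countable (range (\<lambda>n::nat. cbox (-real n) (real n)))" by simp
  show "range (\<lambda>n::nat. cbox (-real n) (real n)) \<subseteq> sets lebesgue" using lmeasurable_cbox by blast
  show "\<Union> (range (\<lambda>n::nat. cbox (-real n) (real n))) = space lebesgue"
  proof -
    have "\<exists>n::nat. x \<in> cbox (-real n) (real n)" for x :: real
      by (rule exI[of _ "nat \<lceil>\<bar>x\<bar>\<rceil>"]) (auto simp: abs_le_iff, linarith+)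
    then show ?thesis by (simp add: set_eq_iff)
  qed
  show "\<forall>a\<in>range (\<lambda>n::nat. cbox (-real n) (real n)). emeasure lebesgue a \<noteq> \<infinity>"
  proof
    fix a assume "a \<in> range (\<lambda>n::nat. cbox (-real n) (real n))"
    then obtain n::nat where "a = cbox (-real n) (real n)" by blast
    then show "emeasure lebesgue a \<noteq> \<infinity>" using fmeasurableD2[OF lmeasurable_cbox, of "-real n" "real n"]
      by (simp add: infinity_ennreal_def)
  qed
qed

lemma ae_zero_intervals:
  fixes F :: "real \<Rightarrow> 'a::euclidean_space"
  assumes F: "integrable lebesgue F"
    and tot: "integral\<^sup>L lebesgue F = 0"
    and ivl: "\<And>x y. (LINT t:{x..y}|lebesgue. F t) = 0"
  shows "AE x in lebesgue. F x = 0"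
proof -
  have si: "set_integrable lebesgue A F" if "A \<in> sets lebesgue" for A
    unfolding set_integrable_def using integrable_mult_indicator[OF that F] .
  have bor: "(LINT t:A|lebesgue. F t) = 0" if A: "A \<in> sets borel" for A
  proof -
    have "Int_stable (range (\<lambda>(a,b). {a..b::real}))"
      unfolding Int_stable_def by (auto simp: Int_atLeastAtMost)
    moreover have "range (\<lambda>(a,b). {a..b::real}) \<subseteq> Pow UNIV" by simp
    moreover have "A \<in> sigma_sets UNIV (range (\<lambda>(a,b). {a..b::real}))"
      using A borel_sigma_ivl by simp
    ultimately show ?thesis
    proof (induct rule: sigma_sets_induct_disjoint)
      case (basic A)
      then show ?case using ivl by auto
    next
      case empty
      then show ?case by (simp add: set_lebesgue_integral_def)
    next
      case (compl A)
      have Al: "A \<in> sets lebesgue" using compl(1) borel_sigma_ivl borel_lebesgue by auto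
      have Cl: "UNIV - A \<in> sets lebesgue" using Al by auto
      have "(LINT t:(A \<union> (UNIV - A))|lebesgue. F t) = (LINT t:A|lebesgue. F t) + (LINT t:(UNIV - A)|lebesgue. F t)"
        by (rule set_integral_Un) (auto intro: si Al Cl)
      moreover have "(LINT t:(A \<union> (UNIV - A))|lebesgue. F t) = 0"
        using tot by (simp add: set_lebesgue_integral_def)
      ultimately show ?case using compl(2) by simp
    next
      case (union A)
      have Al: "A i \<in> sets lebesgue" for i using union(2) by (intro borel_lebesgue) (auto simp: borel_sigma_ivl)
      define B where "B n = (\<Union>i<n. A i)" for n
      have Bl: "B n \<in> sets lebesgue" for n unfolding B_def using Al by auto
      have B0: "(LINT t:B n|lebesgue. F t) = 0" for n
      proof (induct n)
        case 0 then show ?case by (simp add: B_def set_lebesgue_integral_def)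
      next
        case (Suc n)
        have "B (Suc n) = B n \<union> A n" by (auto simp: B_def lessThan_Suc)
        moreover have "B n \<inter> A n = {}"
        proof -
          { fix x i assume "i < n" "x \<in> A i" "x \<in> A n"
            then have False using union(1)[unfolded disjoint_family_on_def, rule_format, of i n] by auto }
          then show ?thesis by (auto simp: B_def)
        qed
        ultimately have "(LINT t:B (Suc n)|lebesgue. F t) = (LINT t:B n|lebesgue. F t) + (LINT t:A n|lebesgue. F t)"
          using set_integral_Un[of "B n" "A n" lebesgue F, OF _ si[OF Bl] si[OF Al]] by simp
        then show ?case using Suc union(3) by simp
      qed
      have UB: "(\<Union>n. B n) = (\<Union>i. A i)" by (auto simp: B_def)
      have "(\<lambda>n. LINT t:B n|lebesgue. F t) \<longlonglongrightarrow> (LINT t:(\<Union>n. B n)|lebesgue. F t)"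
      proof (rule set_integral_cont_up)
        show "incseq B" unfolding incseq_def B_def by (auto intro!: UN_mono) (meson lessThan_iff order_less_le_trans)
        show "set_integrable lebesgue (\<Union> (range B)) F" using Bl by (intro si sets.countable_UN) auto
      qed (rule Bl)
      then have "(\<lambda>n. 0) \<longlonglongrightarrow> (LINT t:(\<Union>n. B n)|lebesgue. F t)" using B0 by simp
      then have "(LINT t:(\<Union>n. B n)|lebesgue. F t) = 0" using LIMSEQ_unique[OF _ tendsto_const] by blast
      then show ?case using UB by simp
    qed
  qed
  have "AE x in lebesgue. F x = (\<lambda>_. 0) x"
  proof (rule sigma_finite_measure.density_unique_banach[OF sigma_finite_lebesgue_real F])
    show "integrable lebesgue (\<lambda>_. 0::'a)" by simp
    fix A :: "real set" assume A: "A \<in> sets lebesgue"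
    obtain B N where BN: "B \<in> sets borel" "negligible N" "B \<union> N = A"
      using sets_lebesgue_almost_borel[OF A] by metis
    have Nn: "N \<in> null_sets lebesgue" using BN(2) negligible_iff_null_sets by blast
    have "(LINT t:A|lebesgue. F t) = (LINT t:B|lebesgue. F t)"
      unfolding set_lebesgue_integral_def
    proof (rule integral_cong_AE)
      show "(\<lambda>x. indicat_real A x *\<^sub>R F x) \<in> borel_measurable lebesgue"
        using integrable_mult_indicator[OF A F] by auto
      show "(\<lambda>x. indicat_real B x *\<^sub>R F x) \<in> borel_measurable lebesgue"
        using integrable_mult_indicator[OF borel_lebesgue[OF BN(1)] F] by auto
      show "AE x in lebesgue. indicat_real A x *\<^sub>R F x = indicat_real B x *\<^sub>R F x"
        by (rule AE_I'[OF Nn]) (use BN(3) in \<open>auto simp: indicator_def\<close>)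
    qed
    then show "(LINT t:A|lebesgue. F t) = (LINT t:A|lebesgue. 0)"
      using bor[OF BN(1)] by (simp add: set_lebesgue_integral_def)
  qed
  then show ?thesis by simp
qed



lemma ai_sub_int:
  fixes g :: "real \<Rightarrow> 'a::euclidean_space"
  assumes "g absolutely_integrable_on {a..b}" "a \<le> c" "d \<le> b"
  shows "g integrable_on {c..d}" "g absolutely_integrable_on {c..d}"
proof -
  have "{c..d} \<subseteq> {a..b}" using assms(2,3) by auto
  then show ai: "g absolutely_integrable_on {c..d}"
    by (rule absolutely_integrable_on_subinterval[OF assms(1)])
  show "g integrable_on {c..d}" using set_lebesgue_integral_eq_integral(1)[OF ai] .
qed

lemma wderiv_diff_int:
  fixes f g :: "real \<Rightarrow> 'a::euclidean_space"
  assumes w: "wderiv a b f g" and "a \<le> c" "c \<le> d" "d \<le> b"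
  shows "integral {c..d} g = f d - f c"
proof -
  have gi: "g absolutely_integrable_on {a..b}" using w unfolding wderiv_def by blast
  have gd: "g integrable_on {a..d}" using ai_sub_int(1)[OF gi order_refl assms(4)] .
  have "integral {a..c} g + integral {c..d} g = integral {a..d} g"
    using assms(2,3) gd by (rule Henstock_Kurzweil_Integration.integral_combine)
  moreover have fa: "\<forall>t\<in>{a..b}. f t = f a + integral {a..t} g" using w unfolding wderiv_def by blast
  moreover have "d \<in> {a..b}" "c \<in> {a..b}" using assms(2,3,4) by auto
  ultimately have "integral {a..c} g + integral {c..d} g = integral {a..d} g"
    "f d = f a + integral {a..d} g" "f c = f a + integral {a..c} g" by blast+
  then have "f d - f c = (integral {a..c} g + integral {c..d} g) - integral {a..c} g" by simp
  then show ?thesis by simp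
qed
lemma wderiv_unique:
  fixes f g1 g2 :: "real \<Rightarrow> 'a::euclidean_space"
  assumes w1: "wderiv a b f g1" and w2: "wderiv a b f g2"
  shows "\<exists>N. negligible N \<and> (\<forall>x\<in>{a..b}-N. g1 x = g2 x)"
proof -
  define k where "k x = g1 x - g2 x" for x
  have a1: "g1 absolutely_integrable_on {a..b}" and a2: "g2 absolutely_integrable_on {a..b}"
    using w1 w2 unfolding wderiv_def by blast+
  have ai: "k absolutely_integrable_on {a..b}"
    unfolding k_def using set_integral_diff(1)[OF a1 a2] .
  have ivl0: "integral {c..d} k = 0" if "a \<le> c" "d \<le> b" for c d
  proof (cases "c \<le> d")
    case True
    have "integral {c..d} k = integral {c..d} g1 - integral {c..d} g2"
      unfolding k_def using ai_sub_int(1)[OF a1 that] ai_sub_int(1)[OF a2 that]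
      by (rule integral_diff)
    also have "\<dots> = 0"
      using wderiv_diff_int[OF w1 that(1) True that(2)] wderiv_diff_int[OF w2 that(1) True that(2)] by simp
    finally show ?thesis .
  next
    case False
    then show ?thesis by simp
  qed
  define F where "F x = indicator {a..b} x *\<^sub>R k x" for x
  have Fi: "integrable lebesgue F" using ai unfolding set_integrable_def F_def .
  have ivl: "(LINT t:{x..y}|lebesgue. F t) = 0" for x y
  proof -
    have "(LINT t:{x..y}|lebesgue. F t) = (LINT t:{max x a..min y b}|lebesgue. k t)"
      unfolding set_lebesgue_integral_def F_def
      by (rule arg_cong[where f="integral\<^sup>L lebesgue"]) (auto simp: indicator_def fun_eq_iff)
    also have "\<dots> = integral {max x a..min y b} k"
      by (rule set_lebesgue_integral_eq_integral(2)[OF ai_sub_int(2)[OF ai]]) auto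
    also have "\<dots> = 0" by (rule ivl0) auto
    finally show ?thesis .
  qed
  have tot: "integral\<^sup>L lebesgue F = 0"
  proof -
    have "integral\<^sup>L lebesgue F = (LINT t:{a..b}|lebesgue. F t)"
      unfolding set_lebesgue_integral_def F_def
      by (rule arg_cong[where f="integral\<^sup>L lebesgue"]) (auto simp: indicator_def fun_eq_iff)
    then show ?thesis using ivl by simp
  qed
  have "AE x in lebesgue. F x = 0" by (rule ae_zero_intervals[OF Fi tot ivl])
  then obtain N where N: "{x \<in> space lebesgue. \<not> F x = 0} \<subseteq> N" "N \<in> null_sets lebesgue"
    by (elim AE_E) (blast intro: null_setsI)
  have "negligible N" using N(2) negligible_iff_null_sets by blast
  moreover have "\<forall>x\<in>{a..b}-N. g1 x = g2 x"
  proof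
    fix x assume "x \<in> {a..b} - N"
    then have "F x = 0" using N(1) by auto
    then show "g1 x = g2 x" using \<open>x \<in> {a..b} - N\<close> by (simp add: F_def k_def)
  qed
  ultimately show ?thesis by blast
qed



definition aff :: "(nat \<Rightarrow> real) \<Rightarrow> (real \<Rightarrow> 'a::euclidean_space) \<Rightarrow> nat \<Rightarrow> real \<Rightarrow> 'a" where
  "aff xs v k t = v (xs k) + ((t - xs k) / (xs (Suc k) - xs k)) *\<^sub>R (v (xs (Suc k)) - v (xs k))"

definition dsl :: "(nat \<Rightarrow> real) \<Rightarrow> (real \<Rightarrow> 'a::euclidean_space) \<Rightarrow> nat \<Rightarrow> 'a" where
  "dsl xs v k = (1 / (xs (Suc k) - xs k)) *\<^sub>R (v (xs (Suc k)) - v (xs k))"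

definition slope :: "(nat \<Rightarrow> real) \<Rightarrow> (real \<Rightarrow> 'a::euclidean_space) \<Rightarrow> real \<Rightarrow> 'a" where
  "slope xs v t = dsl xs v (LEAST j. t \<le> xs (Suc j))"

lemma interp1_aff: "interp1 xs v t = aff xs v (LEAST j. t \<le> xs (Suc j)) t"
  by (simp add: interp1_def aff_def Let_def)

lemma aff_dsl: "aff xs v k t = v (xs k) + (t - xs k) *\<^sub>R dsl xs v k"
  by (simp add: aff_def dsl_def)

lemma aff_left: "aff xs v k (xs k) = v (xs k)"
  by (simp add: aff_def)

lemma aff_right: "xs k < xs (Suc k) \<Longrightarrow> aff xs v k (xs (Suc k)) = v (xs (Suc k))"
  by (simp add: aff_def)

lemma mesh_props: "is_mesh a b xs M \<Longrightarrow> 1 \<le> M \<and> xs 0 = a \<and> xs M = b \<and> (\<forall>i<M. xs i < xs (Suc i))"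
  by (simp add: is_mesh_def)

lemma mesh_mono:
  assumes m: "is_mesh a b xs M" shows "i < j \<Longrightarrow> j \<le> M \<Longrightarrow> xs i < xs j"
proof (induct j)
  case 0 then show ?case by simp
next
  case (Suc j)
  have s: "xs j < xs (Suc j)" using m Suc.prems unfolding is_mesh_def by auto
  show ?case
  proof (cases "i = j")
    case True then show ?thesis using s by simp
  next
    case False then have "i < j" using Suc.prems by simp
    then have "xs i < xs j" using Suc by simp
    then show ?thesis using s by simp
  qed
qed

lemma mesh_mono_le:
  assumes m: "is_mesh a b xs M" shows "i \<le> j \<Longrightarrow> j \<le> M \<Longrightarrow> xs i \<le> xs j"
  using mesh_mono[OF m, of i j] by (cases "i = j") auto

lemma least_props:
  assumes m: "is_mesh a b xs M" and t: "xs 0 \<le> t" "t \<le> xs M"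
  shows "(LEAST j. t \<le> xs (Suc j)) < M" "t \<le> xs (Suc (LEAST j. t \<le> xs (Suc j)))"
    "(LEAST j. t \<le> xs (Suc j)) = 0 \<or> xs (LEAST j. t \<le> xs (Suc j)) < t"
proof -
  let ?k = "LEAST j. t \<le> xs (Suc j)"
  have M1: "Suc (M - 1) = M" using m unfolding is_mesh_def by auto
  have ex: "t \<le> xs (Suc (M - 1))" using t M1 by simp
  show "t \<le> xs (Suc ?k)" using ex by (rule LeastI)
  have "?k \<le> M - 1" using ex by (rule Least_le)
  then show "?k < M" using M1 by linarith
  show "?k = 0 \<or> xs ?k < t"
  proof (cases ?k)
    case 0 then show ?thesis by simp
  next
    case (Suc l)
    have "l < ?k" using Suc by simp
    then have "\<not> t \<le> xs (Suc l)" by (rule not_less_Least)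
    then show ?thesis using Suc by simp
  qed
qed

lemma least_eq:
  assumes m: "is_mesh a b xs M" and j: "j < M" and t: "xs j < t" "t \<le> xs (Suc j)"
  shows "(LEAST k. t \<le> xs (Suc k)) = j"
proof (rule Least_equality)
  show "t \<le> xs (Suc j)" by (rule t(2))
  fix k assume k: "t \<le> xs (Suc k)"
  show "j \<le> k"
  proof (rule ccontr)
    assume "\<not> j \<le> k"
    then have "Suc k \<le> j" by simp
    then have "xs (Suc k) \<le> xs j" using mesh_mono_le[OF m, of "Suc k" j] j by simp
    then show False using k t by simp
  qed
qed

lemma interp_elem:
  assumes m: "is_mesh a b xs M" and j: "j < M" and t: "xs j \<le> t" "t \<le> xs (Suc j)"
  shows "interp1 xs v t = aff xs v j t"
proof -
  let ?k = "LEAST j. t \<le> xs (Suc j)"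
  have t0: "xs 0 \<le> t" using mesh_mono_le[OF m, of 0 j] j t by simp
  have tM: "t \<le> xs M" using mesh_mono_le[OF m, of "Suc j" M] j t by simp
  note L = least_props[OF m t0 tM]
  have "aff xs v ?k t = aff xs v j t"
  proof (cases "?k = j")
    case True then show ?thesis by simp
  next
    case False
    show ?thesis
    proof (cases "?k < j")
      case True
      then have "xs (Suc ?k) \<le> xs j" using mesh_mono_le[OF m, of "Suc ?k" j] j by simp
      then have eq1: "t = xs (Suc ?k)" and eq2: "t = xs j" using L(2) t by auto
      have "xs ?k < xs (Suc ?k)" using m L(1) unfolding is_mesh_def by auto
      then have "aff xs v ?k t = v t" using aff_right[of xs ?k v] eq1 by simp
      moreover have "aff xs v j t = v t" using aff_left[of xs v j] eq2 by simp
      ultimately show ?thesis by simp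
    next
      case False
      then have "j < ?k" using \<open>?k \<noteq> j\<close> by simp
      then have "xs (Suc j) \<le> xs ?k" using mesh_mono_le[OF m, of "Suc j" ?k] L(1) by simp
      moreover have "xs ?k < t" using L(3) \<open>j < ?k\<close> by auto
      ultimately show ?thesis using t by simp
    qed
  qed
  then show ?thesis by (simp add: interp1_aff)
qed

lemma interp_node:
  assumes m: "is_mesh a b xs M" and i: "i \<le> M"
  shows "interp1 xs v (xs i) = v (xs i)"
proof (cases "i < M")
  case True
  then show ?thesis using interp_elem[OF m True, of "xs i" v] mesh_mono_le[OF m, of i "Suc i"] aff_left
    by simp
next
  case False
  then have iM: "i = M" using i by simp
  have M1: "Suc (M - 1) = M" "M - 1 < M" using m unfolding is_mesh_def by auto
  have s: "xs (M - 1) < xs (Suc (M - 1))" using m M1 unfolding is_mesh_def by auto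
  have "interp1 xs v (xs (Suc (M - 1))) = aff xs v (M - 1) (xs (Suc (M - 1)))"
    using interp_elem[OF m M1(2), of "xs (Suc (M - 1))" v] s by simp
  also have "\<dots> = v (xs (Suc (M - 1)))" using aff_right[OF s] .
  finally show ?thesis using iM M1 by simp
qed

lemma slope_elem:
  assumes m: "is_mesh a b xs M" and j: "j < M" and t: "xs j < t" "t \<le> xs (Suc j)"
  shows "slope xs v t = dsl xs v j"
  unfolding slope_def least_eq[OF m j t] ..

lemma locate_nonnode:
  assumes m: "is_mesh a b xs M" and x: "xs 0 \<le> x" "x \<le> xs M" "x \<notin> xs ` {..M}"
  shows "\<exists>j<M. xs j < x \<and> x < xs (Suc j)"
proof -
  let ?k = "LEAST j. x \<le> xs (Suc j)"
  note L = least_props[OF m x(1,2)]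
  have "xs ?k < x"
  proof (cases "?k = 0")
    case True
    have "x \<noteq> xs 0" using x(3) by auto
    then show ?thesis using True x(1) by simp
  next
    case False then show ?thesis using L(3) by simp
  qed
  moreover have "x \<noteq> xs (Suc ?k)" using x(3) L(1) by auto
  ultimately show ?thesis using L(1,2) by (intro exI[of _ ?k]) auto
qed

lemma slope_bound:
  assumes m: "is_mesh a b xs M" and x: "xs 0 \<le> x" "x \<le> xs M"
  shows "norm (slope xs v x) \<le> (\<Sum>j<M. norm (dsl xs v j))"
proof -
  have "(LEAST j. x \<le> xs (Suc j)) \<in> {..<M}" using least_props(1)[OF m x] by simp
  then show ?thesis unfolding slope_def
    by (rule member_le_sum[where f="\<lambda>j. norm (dsl xs v j)"]) simp_all
qed



lemma integrable_mesh:
  fixes f :: "real \<Rightarrow> 'b::banach"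
  assumes m: "is_mesh a b xs M" and e: "\<And>j. j < M \<Longrightarrow> f integrable_on {xs j..xs (Suc j)}"
  shows "f integrable_on {xs 0..xs M}"
proof -
  have "n \<le> M \<Longrightarrow> f integrable_on {xs 0..xs n}" for n
  proof (induct n)
    case 0
    have "{xs 0..xs 0} = cbox (xs 0) (xs 0)" by simp
    then show ?case using integrable_on_refl by metis
  next
    case (Suc n)
    have "xs 0 \<le> xs n" "xs n \<le> xs (Suc n)" using mesh_mono_le[OF m] Suc.prems by auto
    then show ?case using Suc e by (intro Henstock_Kurzweil_Integration.integrable_combine[of "xs 0" "xs n" "xs (Suc n)"]) auto
  qed
  then show ?thesis by simp
qed

lemma integral_mesh:
  fixes f :: "real \<Rightarrow> 'b::banach"
  assumes m: "is_mesh a b xs M" and fi: "f integrable_on {xs 0..xs M}"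
  shows "integral {xs 0..xs M} f = (\<Sum>j<M. integral {xs j..xs (Suc j)} f)"
proof -
  have "n \<le> M \<Longrightarrow> integral {xs 0..xs n} f = (\<Sum>j<n. integral {xs j..xs (Suc j)} f)" for n
  proof (induct n)
    case 0
    have "{xs 0..xs 0} = cbox (xs 0) (xs 0)" by simp
    then show ?case by (metis integral_refl lessThan_0 sum.empty)
  next
    case (Suc n)
    have le: "xs 0 \<le> xs n" "xs n \<le> xs (Suc n)" "xs (Suc n) \<le> xs M" using mesh_mono_le[OF m] Suc.prems by auto
    have fi': "f integrable_on {xs 0..xs (Suc n)}"
      using fi le by (intro integrable_on_subinterval[OF fi]) auto
    have "integral {xs 0..xs n} f + integral {xs n..xs (Suc n)} f = integral {xs 0..xs (Suc n)} f"
      using le(1,2) fi' by (rule Henstock_Kurzweil_Integration.integral_combine)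
    then show ?case using Suc by simp
  qed
  then show ?thesis by simp
qed

lemma interp_cont:
  assumes m: "is_mesh a b xs M"
  shows "continuous_on {xs 0..xs M} (interp1 xs v)"
proof -
  have "n \<le> M \<Longrightarrow> continuous_on {xs 0..xs n} (interp1 xs v)" for n
  proof (induct n)
    case 0 then show ?case by simp
  next
    case (Suc n)
    have le: "xs 0 \<le> xs n" "xs n \<le> xs (Suc n)" using mesh_mono_le[OF m] Suc.prems by auto
    have "continuous_on {xs n..xs (Suc n)} (aff xs v n)"
      unfolding aff_def using mesh_mono[OF m, of n "Suc n"] Suc.prems by (intro continuous_intros) auto
    moreover have "\<forall>t\<in>{xs n..xs (Suc n)}. aff xs v n t = interp1 xs v t"
      using interp_elem[OF m, of n _ v] Suc.prems by (metis Suc_le_eq atLeastAtMost_iff)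
    ultimately have c2: "continuous_on {xs n..xs (Suc n)} (interp1 xs v)"
      by (metis continuous_on_eq)
    have "{xs 0..xs (Suc n)} = {xs 0..xs n} \<union> {xs n..xs (Suc n)}" using le by auto
    then show ?case using continuous_on_closed_Un[OF _ _ Suc(1) c2] Suc.prems by simp
  qed
  then show ?thesis by simp
qed

lemma aff_deriv: "(aff xs v j has_vector_derivative dsl xs v j) (at x)"
proof -
  have "aff xs v j = (\<lambda>t. v (xs j) + (t - xs j) *\<^sub>R dsl xs v j)" by (rule ext) (simp add: aff_dsl)
  moreover have "((\<lambda>t. v (xs j) + (t - xs j) *\<^sub>R dsl xs v j) has_vector_derivative dsl xs v j) (at x)"
    by (auto intro!: derivative_eq_intros)
  ultimately show ?thesis by simp
qed

lemma interp_deriv: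
  assumes m: "is_mesh a b xs M" and j: "j < M" and x: "xs j < x" "x < xs (Suc j)"
  shows "(interp1 xs v has_vector_derivative dsl xs v j) (at x)"
proof (rule has_vector_derivative_transform_within_open[OF aff_deriv])
  show "open {xs j<..<xs (Suc j)}" by simp
  show "x \<in> {xs j<..<xs (Suc j)}" using x by simp
  fix y assume "y \<in> {xs j<..<xs (Suc j)}"
  then show "aff xs v j y = interp1 xs v y" using interp_elem[OF m j, of y v] by simp
qed

lemma interp_ftc:
  assumes m: "is_mesh a b xs M" and t: "xs 0 \<le> t" "t \<le> xs M"
  shows "(slope xs v has_integral (interp1 xs v t - interp1 xs v (xs 0))) {xs 0..t}"
proof (rule fundamental_theorem_of_calculus_strong[of "xs ` {..M}"])
  show "finite (xs ` {..M})" by simp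
  show "xs 0 \<le> t" by (rule t(1))
  show "continuous_on {xs 0..t} (interp1 xs v)"
    by (rule continuous_on_subset[OF interp_cont[OF m]]) (use t in auto)
  fix x assume x: "x \<in> {xs 0..t} - xs ` {..M}"
  then obtain j where j: "j < M" "xs j < x" "x < xs (Suc j)"
    using locate_nonnode[OF m, of x] t by auto
  have "slope xs v x = dsl xs v j" using slope_elem[OF m j(1), of x v] j by simp
  then show "(interp1 xs v has_vector_derivative slope xs v x) (at x)"
    using interp_deriv[OF m j] by simp
qed

lemma slope_wderiv:
  assumes m: "is_mesh a b xs M"
  shows "wderiv (xs 0) (xs M) (interp1 xs v) (slope xs v)"
  unfolding wderiv_def
proof
  have "xs 0 \<le> xs M" using mesh_mono_le[OF m, of 0 M] by simp
  then have si: "slope xs v integrable_on {xs 0..xs M}"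
    using interp_ftc[OF m \<open>xs 0 \<le> xs M\<close> order_refl] by blast
  show "slope xs v absolutely_integrable_on {xs 0..xs M}"
  proof (rule absolutely_integrable_integrable_bound[where g="\<lambda>_. (\<Sum>j<M. norm (dsl xs v j))"])
    fix x assume "x \<in> {xs 0..xs M}"
    then show "norm (slope xs v x) \<le> (\<Sum>j<M. norm (dsl xs v j))" using slope_bound[OF m] by auto
  qed (use si in auto)
  show "\<forall>t\<in>{xs 0..xs M}. interp1 xs v t = interp1 xs v (xs 0) + integral {xs 0..t} (slope xs v)"
  proof
    fix t assume "t \<in> {xs 0..xs M}"
    then have "integral {xs 0..t} (slope xs v) = interp1 xs v t - interp1 xs v (xs 0)"
      using interp_ftc[OF m] by (intro integral_unique) auto
    then show "interp1 xs v t = interp1 xs v (xs 0) + integral {xs 0..t} (slope xs v)" by simp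
  qed
qed

lemma slope_sq_elem:
  assumes m: "is_mesh a b xs M" and j: "j < M"
  shows "(\<lambda>t. (norm (slope xs v t))\<^sup>2) integrable_on {xs j..xs (Suc j)}"
    "integral {xs j..xs (Suc j)} (\<lambda>t. (norm (slope xs v t))\<^sup>2) = (xs (Suc j) - xs j) * (norm (dsl xs v j))\<^sup>2"
proof -
  have eq: "(norm (slope xs v t))\<^sup>2 = (norm (dsl xs v j))\<^sup>2" if "t \<in> {xs j..xs (Suc j)} - {xs j}" for t
    using slope_elem[OF m j, of t v] that by simp
  show "(\<lambda>t. (norm (slope xs v t))\<^sup>2) integrable_on {xs j..xs (Suc j)}"
    by (rule integrable_spike_finite[of "{xs j}" _ _ "\<lambda>_. (norm (dsl xs v j))\<^sup>2"]) (use eq in auto)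
  have "integral {xs j..xs (Suc j)} (\<lambda>t. (norm (slope xs v t))\<^sup>2) = integral {xs j..xs (Suc j)} (\<lambda>_. (norm (dsl xs v j))\<^sup>2)"
    by (rule integral_spike[of "{xs j}"]) (use eq in auto)
  also have "\<dots> = (xs (Suc j) - xs j) * (norm (dsl xs v j))\<^sup>2"
    using mesh_mono_le[OF m, of j "Suc j"] j by simp
  finally show "integral {xs j..xs (Suc j)} (\<lambda>t. (norm (slope xs v t))\<^sup>2) = (xs (Suc j) - xs j) * (norm (dsl xs v j))\<^sup>2" .
qed

lemma slope_sq:
  assumes m: "is_mesh a b xs M"
  shows "sq_int (xs 0) (xs M) (slope xs v)"
    "L2sq (xs 0) (xs M) (slope xs v) = (\<Sum>j<M. (xs (Suc j) - xs j) * (norm (dsl xs v j))\<^sup>2)"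
proof -
  have i: "(\<lambda>t. (norm (slope xs v t))\<^sup>2) integrable_on {xs 0..xs M}"
    using integrable_mesh[OF m slope_sq_elem(1)[OF m]] .
  then show "sq_int (xs 0) (xs M) (slope xs v)" by (simp add: sq_int_def)
  show "L2sq (xs 0) (xs M) (slope xs v) = (\<Sum>j<M. (xs (Suc j) - xs j) * (norm (dsl xs v j))\<^sup>2)"
    unfolding L2sq_def integral_mesh[OF m i] using slope_sq_elem(2)[OF m] by (intro sum.cong) auto
qed



lemma sq_exp:
  fixes g :: "real \<Rightarrow> 'a::euclidean_space"
  assumes pq: "p \<le> q" and gi: "g integrable_on {p..q}" and g2: "(\<lambda>s. (norm (g s))\<^sup>2) integrable_on {p..q}"
  shows "(\<lambda>s. (norm (g s - c))\<^sup>2) integrable_on {p..q}"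
        "integral {p..q} (\<lambda>s. (norm (g s - c))\<^sup>2) = integral {p..q} (\<lambda>s. (norm (g s))\<^sup>2) - 2 * (integral {p..q} g \<bullet> c) + (q - p) * (norm c)\<^sup>2"
proof -
  have eq: "(norm (x - c))\<^sup>2 = ((norm x)\<^sup>2 + (-2) *\<^sub>R (x \<bullet> c)) + (norm c)\<^sup>2" for x :: 'a
    by (simp add: power2_norm_eq_inner inner_diff_left inner_diff_right inner_commute)
  have ic: "(\<lambda>s. g s \<bullet> c) integrable_on {p..q}" using integrable_linear[OF gi bounded_linear_inner_left] by (simp add: o_def)
  have icv: "integral {p..q} (\<lambda>s. g s \<bullet> c) = integral {p..q} g \<bullet> c"
    using integral_linear[OF gi bounded_linear_inner_left] by (simp add: o_def)
  have cc: "(\<lambda>_. (norm c)\<^sup>2) integrable_on {p..q}" using integrable_const[of "(norm c)\<^sup>2" p q] by simp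
  have f: "(\<lambda>s. (norm (g s - c))\<^sup>2) = (\<lambda>s. ((norm (g s))\<^sup>2 + (-2) *\<^sub>R (g s \<bullet> c)) + (norm c)\<^sup>2)"
    using eq by auto
  have i1: "(\<lambda>s. (norm (g s))\<^sup>2 + (-2) *\<^sub>R (g s \<bullet> c)) integrable_on {p..q}"
    by (rule integrable_add[OF g2 integrable_cmul[OF ic]])
  show "(\<lambda>s. (norm (g s - c))\<^sup>2) integrable_on {p..q}"
    unfolding f by (rule integrable_add[OF i1 cc])
  have "integral {p..q} (\<lambda>s. (norm (g s - c))\<^sup>2)
      = integral {p..q} (\<lambda>s. (norm (g s))\<^sup>2 + (-2) *\<^sub>R (g s \<bullet> c)) + integral {p..q} (\<lambda>_. (norm c)\<^sup>2)"
    unfolding f by (rule integral_add[OF i1 cc])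
  also have "\<dots> = (integral {p..q} (\<lambda>s. (norm (g s))\<^sup>2) + integral {p..q} (\<lambda>s. (-2) *\<^sub>R (g s \<bullet> c))) + integral {p..q} (\<lambda>_. (norm c)\<^sup>2)"
    by (subst integral_add[OF g2 integrable_cmul[OF ic]]) (rule refl)
  also have "\<dots> = (integral {p..q} (\<lambda>s. (norm (g s))\<^sup>2) + (-2) *\<^sub>R integral {p..q} (\<lambda>s. (g s \<bullet> c))) + integral {p..q} (\<lambda>_. (norm c)\<^sup>2)"
    by (subst integral_cmul) (rule refl)
  also have "integral {p..q} (\<lambda>_. (norm c)\<^sup>2) = (q - p) * (norm c)\<^sup>2" using pq by simp
  finally show "integral {p..q} (\<lambda>s. (norm (g s - c))\<^sup>2) = integral {p..q} (\<lambda>s. (norm (g s))\<^sup>2) - 2 * (integral {p..q} g \<bullet> c) + (q - p) * (norm c)\<^sup>2"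
    using icv by simp
qed

lemma nonneg_int: "f integrable_on S \<Longrightarrow> (\<And>x. x \<in> S \<Longrightarrow> 0 \<le> f x) \<Longrightarrow> 0 \<le> integral S (f :: _ \<Rightarrow> real)"
  by (rule integral_nonneg) auto

lemma cs_ineq:
  fixes g :: "real \<Rightarrow> 'a::euclidean_space"
  assumes pq: "p \<le> q" and gi: "g integrable_on {p..q}" and g2: "(\<lambda>s. (norm (g s))\<^sup>2) integrable_on {p..q}"
  shows "(norm (integral {p..q} g))\<^sup>2 \<le> (q - p) * integral {p..q} (\<lambda>s. (norm (g s))\<^sup>2)"
proof (cases "p = q")
  case True then show ?thesis by simp
next
  case False
  then have h: "q - p > 0" using pq by simp
  define G where "G = integral {p..q} g"
  define I where "I = integral {p..q} (\<lambda>s. (norm (g s))\<^sup>2)"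
  define c where "c = (1 / (q - p)) *\<^sub>R G"
  note X = sq_exp[OF pq gi g2, of c]
  have "0 \<le> integral {p..q} (\<lambda>s. (norm (g s - c))\<^sup>2)"
    by (rule nonneg_int[OF X(1)]) simp
  also have "\<dots> = I - 2 * (G \<bullet> c) + (q - p) * (norm c)\<^sup>2"
    using X(2) by (simp add: G_def I_def)
  also have "\<dots> = I - (norm G)\<^sup>2 / (q - p)"
  proof -
    have gc: "G \<bullet> c = (norm G)\<^sup>2 / (q - p)" by (simp add: c_def power2_norm_eq_inner)
    have nc: "norm c = norm G / (q - p)" using h by (simp add: c_def)
    have "(q - p) * (norm c)\<^sup>2 = (norm G)\<^sup>2 / (q - p)"
      unfolding nc using h by (simp add: power2_eq_square)
    then show ?thesis using gc by simp
  qed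
  finally have "(norm G)\<^sup>2 / (q - p) \<le> I" by simp
  then show ?thesis using h by (simp add: G_def I_def field_simps)
qed

lemma poly_of_deriv:
  fixes f :: "real \<Rightarrow> 'a::euclidean_space"
  assumes pq: "p \<le> q"
    and d: "\<And>t. t \<in> {p..q} \<Longrightarrow> (f has_vector_derivative (A + (t - p) *\<^sub>R D)) (at t within {p..q})"
  shows "\<exists>c. \<forall>t\<in>{p..q}. f t = (\<Sum>j\<le>2. t ^ j *\<^sub>R c j)"
proof -
  define P where "P t = (t - p) *\<^sub>R A + ((t - p)\<^sup>2 / 2) *\<^sub>R D" for t
  have dP: "(P has_vector_derivative (A + (t - p) *\<^sub>R D)) (at t within {p..q})" for t
    unfolding P_def[abs_def]
    by (auto intro!: derivative_eq_intros simp: algebra_simps) (rule euclidean_eqI, simp add: inner_add_left field_simps)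
  have "\<exists>K. \<forall>t\<in>{p..q}. (\<lambda>t. f t - P t) t = K"
  proof (rule has_derivative_zero_constant)
    show "convex {p..q}" by simp
    fix t assume "t \<in> {p..q}"
    then have "((\<lambda>t. f t - P t) has_vector_derivative 0) (at t within {p..q})"
      using has_vector_derivative_diff[OF d[of t] dP[of t]] by simp
    then show "((\<lambda>t. f t - P t) has_derivative (\<lambda>h. 0)) (at t within {p..q})"
      by (simp add: has_vector_derivative_def)
  qed
  then obtain K where K: "\<And>t. t \<in> {p..q} \<Longrightarrow> f t = K + P t" by (metis add.commute diff_add_cancel)
  define c where "c j = (if j = 0 then K - p *\<^sub>R A + (p\<^sup>2 / 2) *\<^sub>R D else if j = 1 then A - p *\<^sub>R D else (1/2) *\<^sub>R D)" for j :: nat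
  have "K + P t = (\<Sum>j\<le>2. t ^ j *\<^sub>R c j)" for t
  proof -
    have s: "(\<Sum>j\<le>(2::nat). t ^ j *\<^sub>R c j) = c 0 + t *\<^sub>R c 1 + t\<^sup>2 *\<^sub>R c 2"
      by (simp add: numeral_2_eq_2)
    have "K + P t = c 0 + t *\<^sub>R c 1 + t\<^sup>2 *\<^sub>R c 2" unfolding c_def P_def
      by (rule euclidean_eqI) (simp add: inner_add_left inner_diff_left power2_eq_square field_simps)
    then show ?thesis using s by simp
  qed
  note KP = this
  show ?thesis
  proof (intro exI[of _ c] ballI)
    fix t assume "t \<in> {p..q}"
    then show "f t = (\<Sum>j\<le>2. t ^ j *\<^sub>R c j)" using K KP by metis
  qed
qed



lemma J2_deriv:
  assumes m: "is_mesh a b xs M" and t: "t \<in> {xs 0..xs M}"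
  shows "(J2 xs u u1 has_vector_derivative interp1 xs u1 t) (at t within {xs 0..xs M})"
proof -
  have e: "J2 xs u u1 = (\<lambda>x. u (xs 0) + integral {xs 0..x} (interp1 xs u1))" by (rule ext) (simp add: J2_def)
  have "((\<lambda>x. integral {xs 0..x} (interp1 xs u1)) has_vector_derivative interp1 xs u1 t) (at t within {xs 0..xs M})"
    by (rule integral_has_vector_derivative[OF interp_cont[OF m] t])
  then have "((\<lambda>x. u (xs 0) + integral {xs 0..x} (interp1 xs u1)) has_vector_derivative 0 + interp1 xs u1 t) (at t within {xs 0..xs M})"
    by (rule has_vector_derivative_add[OF has_vector_derivative_const])
  then show ?thesis unfolding e by simp
qed

lemma S2_of_deriv:
  fixes f fd :: "real \<Rightarrow> 'a::euclidean_space"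
  assumes m: "is_mesh a b xs M"
    and d: "\<And>t. t \<in> {xs 0..xs M} \<Longrightarrow> (f has_vector_derivative fd t) (at t within {xs 0..xs M})"
    and e: "\<And>j t. j < M \<Longrightarrow> t \<in> {xs j..xs (Suc j)} \<Longrightarrow> fd t = A j + (t - xs j) *\<^sub>R Dj j"
  shows "S_k0 2 xs M f"
  unfolding S_k0_def
proof (intro conjI ballI)
  show "continuous_on {xs 0..xs M} f"
    unfolding continuous_on_eq_continuous_within
    using d has_vector_derivative_continuous by blast
  fix i assume i: "i \<in> {1..M}"
  define j where "j = i - 1"
  have j: "j < M" "Suc j = i" using i by (auto simp: j_def)
  have sub: "{xs j..xs (Suc j)} \<subseteq> {xs 0..xs M}" using mesh_mono_le[OF m, of 0 j] mesh_mono_le[OF m, of "Suc j" M] j by auto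
  have pq: "xs j \<le> xs (Suc j)" using mesh_mono_le[OF m, of j "Suc j"] j by simp
  have "\<exists>c. \<forall>t\<in>{xs j..xs (Suc j)}. f t = (\<Sum>k\<le>2. t ^ k *\<^sub>R c k)"
  proof (rule poly_of_deriv[OF pq])
    fix t assume t: "t \<in> {xs j..xs (Suc j)}"
    have "(f has_vector_derivative fd t) (at t within {xs j..xs (Suc j)})"
      using has_vector_derivative_within_subset[OF d sub] t sub by blast
    then show "(f has_vector_derivative A j + (t - xs j) *\<^sub>R Dj j) (at t within {xs j..xs (Suc j)})"
      using e[OF j(1) t] by simp
  qed
  then show "\<exists>c. \<forall>t\<in>{xs (i - 1)..xs i}. f t = (\<Sum>k\<le>2. t ^ k *\<^sub>R c k)" using j by (simp add: j_def)
qed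

lemma L2_eq_slope:
  assumes m: "is_mesh a b xs M" and w: "wderiv (xs 0) (xs M) (interp1 xs u1) g"
  shows "L2sq (xs 0) (xs M) g = L2sq (xs 0) (xs M) (slope xs u1)"
proof -
  obtain N where N: "negligible N" "\<forall>x\<in>{xs 0..xs M}-N. g x = slope xs u1 x"
    using wderiv_unique[OF w slope_wderiv[OF m]] by blast
  show ?thesis unfolding L2sq_def
    by (rule integral_spike[OF N(1)]) (use N(2) in auto)
qed

lemma elem_facts:
  assumes m: "is_mesh a b xs M" and H: "H2_rep (xs 0) (xs M) u u1 u2" and j: "j < M"
  shows "u2 integrable_on {xs j..xs (Suc j)}"
    "(\<lambda>s. (norm (u2 s))\<^sup>2) integrable_on {xs j..xs (Suc j)}"
    "integral {xs j..xs (Suc j)} u2 = (xs (Suc j) - xs j) *\<^sub>R dsl xs u1 j"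
    "xs j < xs (Suc j)"
proof -
  have w: "wderiv (xs 0) (xs M) u1 u2" using H unfolding H2_rep_def by blast
  have ai: "u2 absolutely_integrable_on {xs 0..xs M}" using w unfolding wderiv_def by blast
  have sq: "(\<lambda>s. (norm (u2 s))\<^sup>2) integrable_on {xs 0..xs M}" using H unfolding H2_rep_def sq_int_def by blast
  have le: "xs 0 \<le> xs j" "xs (Suc j) \<le> xs M" using mesh_mono_le[OF m, of 0 j] mesh_mono_le[OF m, of "Suc j" M] j by auto
  show lt: "xs j < xs (Suc j)" using mesh_mono[OF m, of j "Suc j"] j by simp
  show "u2 integrable_on {xs j..xs (Suc j)}" using ai_sub_int(1)[OF ai le] .
  show "(\<lambda>s. (norm (u2 s))\<^sup>2) integrable_on {xs j..xs (Suc j)}"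
    by (rule integrable_on_subinterval[OF sq]) (use le in auto)
  have "integral {xs j..xs (Suc j)} u2 = u1 (xs (Suc j)) - u1 (xs j)"
    using wderiv_diff_int[OF w le(1) _ le(2)] lt by simp
  then show "integral {xs j..xs (Suc j)} u2 = (xs (Suc j) - xs j) *\<^sub>R dsl xs u1 j"
    using lt by (simp add: dsl_def)
qed

lemma elem_ineq:
  assumes m: "is_mesh a b xs M" and H: "H2_rep (xs 0) (xs M) u u1 u2" and j: "j < M"
  shows "(xs (Suc j) - xs j) * (norm (dsl xs u1 j))\<^sup>2 \<le> integral {xs j..xs (Suc j)} (\<lambda>s. (norm (u2 s))\<^sup>2)"
proof -
  note E = elem_facts[OF m H j]
  define h where "h = xs (Suc j) - xs j"
  have h: "h > 0" using E(4) by (simp add: h_def)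
  have "(norm (integral {xs j..xs (Suc j)} u2))\<^sup>2 \<le> h * integral {xs j..xs (Suc j)} (\<lambda>s. (norm (u2 s))\<^sup>2)"
    using cs_ineq[OF _ E(1) E(2)] E(4) by (simp add: h_def)
  then have "h\<^sup>2 * (norm (dsl xs u1 j))\<^sup>2 \<le> h * integral {xs j..xs (Suc j)} (\<lambda>s. (norm (u2 s))\<^sup>2)"
    using E(3) h by (simp add: h_def power_mult_distrib)
  then have "h * (h * (norm (dsl xs u1 j))\<^sup>2) \<le> h * integral {xs j..xs (Suc j)} (\<lambda>s. (norm (u2 s))\<^sup>2)"
    by (simp add: power2_eq_square mult.assoc)
  then show ?thesis using h by (simp add: h_def)
qed

lemma L2_u2_split:
  assumes m: "is_mesh a b xs M" and H: "H2_rep (xs 0) (xs M) u u1 u2"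
  shows "L2sq (xs 0) (xs M) u2 = (\<Sum>j<M. integral {xs j..xs (Suc j)} (\<lambda>s. (norm (u2 s))\<^sup>2))"
proof -
  have sq: "(\<lambda>s. (norm (u2 s))\<^sup>2) integrable_on {xs 0..xs M}" using H unfolding H2_rep_def sq_int_def by blast
  show ?thesis unfolding L2sq_def by (rule integral_mesh[OF m sq])
qed

lemma part1_ineq:
  assumes m: "is_mesh a b xs M" and H: "H2_rep (xs 0) (xs M) u u1 u2"
  shows "L2sq (xs 0) (xs M) (slope xs u1) \<le> L2sq (xs 0) (xs M) u2"
  unfolding slope_sq(2)[OF m] L2_u2_split[OF m H]
  by (rule sum_mono) (use elem_ineq[OF m H] in auto)



lemma elem_affine:
  assumes m: "is_mesh a b xs M" and H: "H2_rep (xs 0) (xs M) u u1 u2" and j: "j < M"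
    and eq: "(xs (Suc j) - xs j) * (norm (dsl xs u1 j))\<^sup>2 = integral {xs j..xs (Suc j)} (\<lambda>s. (norm (u2 s))\<^sup>2)"
    and t: "t \<in> {xs j..xs (Suc j)}"
  shows "u1 t = u1 (xs j) + (t - xs j) *\<^sub>R dsl xs u1 j"
proof -
  note E = elem_facts[OF m H j]
  define p where "p = xs j"
  define q where "q = xs (Suc j)"
  define D where "D = dsl xs u1 j"
  have w: "wderiv (xs 0) (xs M) u1 u2" using H unfolding H2_rep_def by blast
  have pq: "p \<le> q" using E(4) by (simp add: p_def q_def)
  have tt: "p \<le> t" "t \<le> q" using t by (auto simp: p_def q_def)
  note X = sq_exp[OF pq E(1)[folded p_def q_def] E(2)[folded p_def q_def], of D]
  have G: "integral {p..q} u2 = (q - p) *\<^sub>R D" using E(3) by (simp add: p_def q_def D_def)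
  have "integral {p..q} (\<lambda>s. (norm (u2 s - D))\<^sup>2) = 0"
  proof -
    have "integral {p..q} u2 \<bullet> D = (q - p) * (norm D)\<^sup>2" unfolding G by (simp add: power2_norm_eq_inner)
    then show ?thesis using X(2) eq by (simp add: p_def q_def D_def)
  qed
  define e where "e s = u2 s - D" for s
  have ei: "e integrable_on {p..t}"
  proof -
    have "u2 integrable_on {p..t}" by (rule integrable_on_subinterval[OF E(1)[folded p_def q_def]]) (use tt in auto)
    moreover have "(\<lambda>_. D) integrable_on {p..t}" using integrable_const[of D p t] by simp
    ultimately show ?thesis unfolding e_def by (rule integrable_diff)
  qed
  have e2: "(\<lambda>s. (norm (e s))\<^sup>2) integrable_on {p..t}"
    unfolding e_def by (rule integrable_on_subinterval[OF X(1)]) (use tt in auto)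
  have "integral {p..t} (\<lambda>s. (norm (e s))\<^sup>2) \<le> integral {p..q} (\<lambda>s. (norm (e s))\<^sup>2)"
    by (rule integral_subset_le) (use tt e2 X(1) in \<open>auto simp: e_def\<close>)
  then have I0: "integral {p..t} (\<lambda>s. (norm (e s))\<^sup>2) \<le> 0"
    using \<open>integral {p..q} (\<lambda>s. (norm (u2 s - D))\<^sup>2) = 0\<close> by (simp add: e_def)
  have "(norm (integral {p..t} e))\<^sup>2 \<le> (t - p) * integral {p..t} (\<lambda>s. (norm (e s))\<^sup>2)"
    by (rule cs_ineq[OF tt(1) ei e2])
  also have "\<dots> \<le> 0" using I0 tt by (simp add: mult_nonneg_nonpos)
  finally have "integral {p..t} e = 0" by simp
  moreover have "integral {p..t} e = integral {p..t} u2 - (t - p) *\<^sub>R D"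
  proof -
    have "u2 integrable_on {p..t}" by (rule integrable_on_subinterval[OF E(1)[folded p_def q_def]]) (use tt in auto)
    moreover have "(\<lambda>_. D) integrable_on {p..t}" using integrable_const[of D p t] by simp
    ultimately have "integral {p..t} (\<lambda>s. u2 s - D) = integral {p..t} u2 - integral {p..t} (\<lambda>_. D)"
      by (rule Henstock_Kurzweil_Integration.integral_diff)
    then show ?thesis unfolding e_def using tt by simp
  qed
  moreover have "integral {p..t} u2 = u1 t - u1 p"
  proof -
    have "xs 0 \<le> p" "q \<le> xs M" using mesh_mono_le[OF m, of 0 j] mesh_mono_le[OF m, of "Suc j" M] j
      by (auto simp: p_def q_def)
    then show ?thesis using wderiv_diff_int[OF w _ tt(1)] tt by simp
  qed
  ultimately show ?thesis by (simp add: p_def D_def algebra_simps)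
qed

lemma sum_termwise:
  fixes f g :: "nat \<Rightarrow> real"
  assumes "finite A" "\<And>j. j \<in> A \<Longrightarrow> f j \<le> g j" "sum g A \<le> sum f A" "j \<in> A"
  shows "f j = g j"
proof (rule ccontr)
  assume "f j \<noteq> g j"
  then have "f j < g j" using assms(2)[OF assms(4)] by simp
  then have "sum f A < sum g A" using assms by (intro sum_strict_mono_ex1) auto
  then show False using assms(3) by simp
qed



lemma J2_H2:
  assumes mesh: "is_mesh a b xs M"
  shows "H2_rep (xs 0) (xs M) (J2 xs u u1) (interp1 xs u1) (slope xs u1)"
  unfolding H2_rep_def using J2_deriv[OF mesh] slope_wderiv[OF mesh] slope_sq(1)[OF mesh] by blast

lemma J2_S:
  assumes mesh: "is_mesh a b xs M"
  shows "S_k0 2 xs M (J2 xs u u1)"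
proof (rule S2_of_deriv[OF mesh, of _ "interp1 xs u1" "\<lambda>j. u1 (xs j)" "dsl xs u1"])
  fix t assume "t \<in> {xs 0..xs M}"
  then show "(J2 xs u u1 has_vector_derivative interp1 xs u1 t) (at t within {xs 0..xs M})"
    by (rule J2_deriv[OF mesh])
next
  fix j t assume j: "j < M" and t: "t \<in> {xs j..xs (Suc j)}"
  then have "interp1 xs u1 t = aff xs u1 j t" using interp_elem[OF mesh j, of t u1] by simp
  then show "interp1 xs u1 t = u1 (xs j) + (t - xs j) *\<^sub>R dsl xs u1 j" by (simp add: aff_dsl)
qed

lemma main_xs:
  assumes mesh: "is_mesh a b xs M"
  shows "(\<forall>(u::real \<Rightarrow> 'a::euclidean_space) u1 u2. H2_rep (xs 0) (xs M) u u1 u2 \<longrightarrow>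
            S_k0 2 xs M (J2 xs u u1) \<and>
            (\<exists>w2. H2_rep (xs 0) (xs M) (J2 xs u u1) (interp1 xs u1) w2) \<and>
            (\<exists>v2. wderiv (xs 0) (xs M) (interp1 xs u1) v2 \<and> sq_int (xs 0) (xs M) v2) \<and>
            (\<forall>w1 w2 v2. H2_rep (xs 0) (xs M) (J2 xs u u1) w1 w2 \<longrightarrow>
                 wderiv (xs 0) (xs M) (interp1 xs u1) v2 \<longrightarrow> sq_int (xs 0) (xs M) v2 \<longrightarrow>
                 L2sq (xs 0) (xs M) w2 = L2sq (xs 0) (xs M) v2 \<and> L2sq (xs 0) (xs M) v2 \<le> L2sq (xs 0) (xs M) u2))
       \<and>
         (\<forall>(uD::real \<Rightarrow> 'a) uD1 uD2 u u1 u2. H2_rep (xs 0) (xs M) uD uD1 uD2 \<longrightarrow>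
            admissible xs M uD uD1 u u1 u2 \<longrightarrow>
            (\<forall>v v1 v2. admissible xs M uD uD1 v v1 v2 \<longrightarrow> bending (xs 0) (xs M) u2 \<le> bending (xs 0) (xs M) v2) \<longrightarrow>
            S_k0 2 xs M u)"
proof (rule conjI)
  have ab: "xs 0 < xs M" using mesh_mono[OF mesh, of 0 M] mesh unfolding is_mesh_def by simp
  show "\<forall>(u::real \<Rightarrow> 'a::euclidean_space) u1 u2. H2_rep (xs 0) (xs M) u u1 u2 \<longrightarrow>
            S_k0 2 xs M (J2 xs u u1) \<and>
            (\<exists>w2. H2_rep (xs 0) (xs M) (J2 xs u u1) (interp1 xs u1) w2) \<and>
            (\<exists>v2. wderiv (xs 0) (xs M) (interp1 xs u1) v2 \<and> sq_int (xs 0) (xs M) v2) \<and>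
            (\<forall>w1 w2 v2. H2_rep (xs 0) (xs M) (J2 xs u u1) w1 w2 \<longrightarrow>
                 wderiv (xs 0) (xs M) (interp1 xs u1) v2 \<longrightarrow> sq_int (xs 0) (xs M) v2 \<longrightarrow>
                 L2sq (xs 0) (xs M) w2 = L2sq (xs 0) (xs M) v2 \<and> L2sq (xs 0) (xs M) v2 \<le> L2sq (xs 0) (xs M) u2)"
  proof (intro allI impI conjI)
    fix u :: "real \<Rightarrow> 'a" and u1 u2 assume H: "H2_rep (xs 0) (xs M) u u1 u2"
    show "S_k0 2 xs M (J2 xs u u1)" by (rule J2_S[OF mesh])
    show "\<exists>w2. H2_rep (xs 0) (xs M) (J2 xs u u1) (interp1 xs u1) w2" using J2_H2[OF mesh] by blast
    show "\<exists>v2. wderiv (xs 0) (xs M) (interp1 xs u1) v2 \<and> sq_int (xs 0) (xs M) v2"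
      using slope_wderiv[OF mesh] slope_sq(1)[OF mesh] by blast
    fix w1 w2 v2
    assume Hw: "H2_rep (xs 0) (xs M) (J2 xs u u1) w1 w2"
      and wv: "wderiv (xs 0) (xs M) (interp1 xs u1) v2" and sv: "sq_int (xs 0) (xs M) v2"
    have w1eq: "w1 t = interp1 xs u1 t" if t: "t \<in> {xs 0..xs M}" for t
    proof -
      have "(J2 xs u u1 has_vector_derivative w1 t) (at t within {xs 0..xs M})"
        using Hw t unfolding H2_rep_def by blast
      moreover have "(J2 xs u u1 has_vector_derivative interp1 xs u1 t) (at t within {xs 0..xs M})"
        by (rule J2_deriv[OF mesh t])
      ultimately show ?thesis
        using vector_derivative_unique_within_closed_interval[of "xs 0" "xs M" t] ab t by simp
    qed
    have ww: "wderiv (xs 0) (xs M) w1 w2" using Hw unfolding H2_rep_def by blast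
    have wd: "wderiv (xs 0) (xs M) (interp1 xs u1) w2"
      unfolding wderiv_def
    proof
      show "w2 absolutely_integrable_on {xs 0..xs M}" using ww unfolding wderiv_def by blast
      have x0: "xs 0 \<in> {xs 0..xs M}" using ab by simp
      have fa: "\<forall>t\<in>{xs 0..xs M}. w1 t = w1 (xs 0) + integral {xs 0..t} w2" using ww unfolding wderiv_def by blast
      show "\<forall>t\<in>{xs 0..xs M}. interp1 xs u1 t = interp1 xs u1 (xs 0) + integral {xs 0..t} w2"
      proof
        fix t assume t: "t \<in> {xs 0..xs M}"
        have "w1 t = w1 (xs 0) + integral {xs 0..t} w2" using fa t by blast
        then show "interp1 xs u1 t = interp1 xs u1 (xs 0) + integral {xs 0..t} w2"
          using w1eq[OF t] w1eq[OF x0] by simp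
      qed
    qed
    show "L2sq (xs 0) (xs M) w2 = L2sq (xs 0) (xs M) v2"
      using L2_eq_slope[OF mesh wd] L2_eq_slope[OF mesh wv] by simp
    show "L2sq (xs 0) (xs M) v2 \<le> L2sq (xs 0) (xs M) u2"
      using L2_eq_slope[OF mesh wv] part1_ineq[OF mesh H] by simp
  qed
  show "\<forall>(uD::real \<Rightarrow> 'a) uD1 uD2 u u1 u2. H2_rep (xs 0) (xs M) uD uD1 uD2 \<longrightarrow>
            admissible xs M uD uD1 u u1 u2 \<longrightarrow>
            (\<forall>v v1 v2. admissible xs M uD uD1 v v1 v2 \<longrightarrow> bending (xs 0) (xs M) u2 \<le> bending (xs 0) (xs M) v2) \<longrightarrow>
            S_k0 2 xs M u"
  proof (intro allI impI)
    fix uD uD1 uD2 u u1 u2 :: "real \<Rightarrow> 'a"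
    assume adm: "admissible xs M uD uD1 u u1 u2"
      and mini: "\<forall>v v1 v2. admissible xs M uD uD1 v v1 v2 \<longrightarrow> bending (xs 0) (xs M) u2 \<le> bending (xs 0) (xs M) v2"
    have H: "H2_rep (xs 0) (xs M) u u1 u2" using adm unfolding admissible_def by blast
    have admJ: "admissible xs M uD uD1 (J2 xs u u1) (interp1 xs u1) (slope xs u1)"
    proof -
      have "J2 xs u u1 (xs 0) = u (xs 0)" by (simp add: J2_def)
      moreover have "interp1 xs u1 (xs i) = u1 (xs i)" if "i \<le> M" for i using interp_node[OF mesh that] .
      ultimately show ?thesis using adm J2_H2[OF mesh] unfolding admissible_def by auto
    qed
    have "bending (xs 0) (xs M) u2 \<le> bending (xs 0) (xs M) (slope xs u1)" using mini admJ by blast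
    then have le1: "L2sq (xs 0) (xs M) u2 \<le> L2sq (xs 0) (xs M) (slope xs u1)" by (simp add: bending_def)
    have eqj: "(xs (Suc j) - xs j) * (norm (dsl xs u1 j))\<^sup>2 = integral {xs j..xs (Suc j)} (\<lambda>s. (norm (u2 s))\<^sup>2)"
      if j: "j < M" for j
    proof (rule sum_termwise[where A="{..<M}" and f="\<lambda>j. (xs (Suc j) - xs j) * (norm (dsl xs u1 j))\<^sup>2"
          and g="\<lambda>j. integral {xs j..xs (Suc j)} (\<lambda>s. (norm (u2 s))\<^sup>2)"])
      show "finite {..<M}" by simp
      show "\<And>j. j \<in> {..<M} \<Longrightarrow> (xs (Suc j) - xs j) * (norm (dsl xs u1 j))\<^sup>2 \<le> integral {xs j..xs (Suc j)} (\<lambda>s. (norm (u2 s))\<^sup>2)"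
        using elem_ineq[OF mesh H] by auto
      show "(\<Sum>j<M. integral {xs j..xs (Suc j)} (\<lambda>s. (norm (u2 s))\<^sup>2)) \<le> (\<Sum>j<M. (xs (Suc j) - xs j) * (norm (dsl xs u1 j))\<^sup>2)"
        using le1 unfolding slope_sq(2)[OF mesh] L2_u2_split[OF mesh H] .
      show "j \<in> {..<M}" using j by simp
    qed
    show "S_k0 2 xs M u"
    proof (rule S2_of_deriv[OF mesh, of _ u1 "\<lambda>j. u1 (xs j)" "dsl xs u1"])
      fix t assume "t \<in> {xs 0..xs M}"
      then show "(u has_vector_derivative u1 t) (at t within {xs 0..xs M})" using H unfolding H2_rep_def by blast
    next
      fix j t assume j: "j < M" and t: "t \<in> {xs j..xs (Suc j)}"
      show "u1 t = u1 (xs j) + (t - xs j) *\<^sub>R dsl xs u1 j" by (rule elem_affine[OF mesh H j eqj[OF j] t])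
    qed
  qed
qed

theorem corollary2p2:
  fixes a b :: real and xs :: "nat \<Rightarrow> real" and M :: nat
  assumes mesh: "is_mesh a b xs M"
  shows "(\<forall>(u::real \<Rightarrow> 'a::euclidean_space) u1 u2. H2_rep a b u u1 u2 \<longrightarrow>
            S_k0 2 xs M (J2 xs u u1) \<and>
            (\<exists>w2. H2_rep a b (J2 xs u u1) (interp1 xs u1) w2) \<and>
            (\<exists>v2. wderiv a b (interp1 xs u1) v2 \<and> sq_int a b v2) \<and>
            (\<forall>w1 w2 v2. H2_rep a b (J2 xs u u1) w1 w2 \<longrightarrow>
                 wderiv a b (interp1 xs u1) v2 \<longrightarrow> sq_int a b v2 \<longrightarrow>
                 L2sq a b w2 = L2sq a b v2 \<and> L2sq a b v2 \<le> L2sq a b u2))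
       \<and>
         (\<forall>(uD::real \<Rightarrow> 'a) uD1 uD2 u u1 u2. H2_rep a b uD uD1 uD2 \<longrightarrow>
            admissible xs M uD uD1 u u1 u2 \<longrightarrow>
            (\<forall>v v1 v2. admissible xs M uD uD1 v v1 v2 \<longrightarrow> bending a b u2 \<le> bending a b v2) \<longrightarrow>
            S_k0 2 xs M u)"
proof -
  have e: "xs 0 = a" "xs M = b" using mesh unfolding is_mesh_def by auto
  show ?thesis using main_xs[OF mesh, where 'a='a, unfolded e] .
qed


end
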